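(* Let $p$ be a prime, $s\geq 2$, and $\lambda_i\in\{0,1,\dots,p-1\}$ for $i\in\{0,\dots,s-1\}$. Then $$\tau_s\Big(\sum_{i=0}^{s-1}\lambda_ip^i\Big)=\sum_{i=0}^{s-1}\tau_s(\lambda_ip^i)\quad\text{in }\mathbb{Z}_{p^{s-1}}^p.$$
   Context: For $r\geq1$ and $u\in\mathbb{Z}_{p^r}$ with $p$-ary expansion $u=\sum_{i=0}^{r-1}u_ip^i$, $\phi_r(u)=(u_{r-1},\dots,u_{r-1})+(u_0,\dots,u_{r-2})Y_{r-1}\in\mathbb{Z}_p^{p^{r-1}}$, where $Y_1=(0\ 1\ \cdots\ p-1)$ and $Y_k$ is the $k\times p^k$ matrix with first $k-1$ rows $(Y_{k-1}\ \cdots\ Y_{k-1})$ ($p$ copies) and last row $(0,\dots,0,1,\dots,1,\dots,p-1,\dots,p-1)$ (blocks of length $p^{k-1}$); $\phi_1=\mathrm{id}$; $\Phi_r$ applies $\phi_r$ coordinatewise and concatenates. $\gamma_s$ is the coordinate permutation of $\mathbb{Z}_p^{p^{s-1}}$ given by $\gamma_s(\mathbf{x})_{j+ip+1}=\mathbf{x}_{jp^{s-2}+i+1}$ for $j\in\{0,\dots,p-1\}$, $i\in\{0,\dots,p^{s-2}-1\}$. The map $\tau_s:\mathbb{Z}_{p^s}\to\mathbb{Z}_{p^{s-1}}^p$ is $\tau_s(u)=\Phi_{s-1}^{-1}(\gamma_s^{-1}(\phi_s(u)))$. *)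

theory Defs
  imports Main "HOL-Computational_Algebra.Primes"
begin

(* Elements of Z_m are represented by naturals in {0..<m}; vectors by lists. *)

definition digit :: "nat \<Rightarrow> nat \<Rightarrow> nat \<Rightarrow> nat" where
  "digit p u i = (u div p ^ i) mod p"

(* Y p k i j : entry (row i, column j), 0-indexed, of the k x p^k matrix Y_k *)
fun Y :: "nat \<Rightarrow> nat \<Rightarrow> nat \<Rightarrow> nat \<Rightarrow> nat" where
  "Y p 0 i j = 0"
| "Y p (Suc 0) i j = j"
| "Y p (Suc (Suc k)) i j =
     (if i < Suc k then Y p (Suc k) i (j mod p ^ Suc k) else j div p ^ Suc k)"

(* phi_r : Z_{p^r} -> Z_p^{p^(r-1)} *)
definition phi :: "nat \<Rightarrow> nat \<Rightarrow> nat \<Rightarrow> nat list" where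
  "phi p r u = (if r = 1 then [u] else
     map (\<lambda>j. (digit p u (r - 1) + (\<Sum>i<r - 1. digit p u i * Y p (r - 1) i j)) mod p)
         [0..<p ^ (r - 1)])"

definition Phi :: "nat \<Rightarrow> nat \<Rightarrow> nat list \<Rightarrow> nat list" where
  "Phi p r xs = concat (map (phi p r) xs)"

definition gamma :: "nat \<Rightarrow> nat \<Rightarrow> nat list \<Rightarrow> nat list" where
  "gamma p s x = map (\<lambda>k. x ! ((k mod p) * p ^ (s - 2) + k div p)) [0..<p ^ (s - 1)]"

(* tau_s(u) = Phi_{s-1}^{-1}(gamma_s^{-1}(phi_s u)), i.e. the unique v in Z_{p^{s-1}}^p
   with gamma_s(Phi_{s-1}(v)) = phi_s(u) *)
definition tau :: "nat \<Rightarrow> nat \<Rightarrow> nat \<Rightarrow> nat list" where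
  "tau p s u = (THE v. length v = p \<and> (\<forall>x\<in>set v. x < p ^ (s - 1))
                    \<and> gamma p s (Phi p (s - 1) v) = phi p s u)"

definition vadd :: "nat \<Rightarrow> nat list \<Rightarrow> nat list \<Rightarrow> nat list" where
  "vadd m xs ys = map2 (\<lambda>a b. (a + b) mod m) xs ys"

definition vsum :: "nat \<Rightarrow> nat \<Rightarrow> (nat \<Rightarrow> nat list) \<Rightarrow> nat \<Rightarrow> nat list" where
  "vsum m n f s = foldr (\<lambda>i acc. vadd m (f i) acc) [0..<s] (replicate n 0)"

end

theory Submission
  imports Defs
begin

lemma digit_mod_pow: "i < n \<Longrightarrow> digit p (x mod p ^ n) i = digit p x i"
proof -
  assume "i < n"
  then obtain m where n: "n = i + Suc m" by (metis add_Suc_right less_iff_Suc_add add.commute)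
  have "x mod p ^ n = x mod (p ^ i * p ^ Suc m)" by (simp only: n power_add)
  moreover have "x mod (a * b) div a = (x div a) mod b" for a b :: nat
    by (cases "a = 0") (simp_all add: mod_mult2_eq)
  ultimately have "x mod p ^ n div p ^ i = (x div p ^ i) mod p ^ Suc m"
    by simp
  then show ?thesis unfolding digit_def
    by (metis dvd_power mod_mod_cancel power_0 zero_less_Suc mod_by_1 bot_nat_0.not_eq_extremum power_eq_0_iff)
qed

lemma digit_add_high: "A < p ^ n \<Longrightarrow> i < n \<Longrightarrow> digit p (A + B * p ^ n) i = digit p A i"
proof -
  assume a: "A < p ^ n" "i < n"
  have "(A + B * p ^ n) mod p ^ n = A" using a by simp
  then show ?thesis using digit_mod_pow[OF a(2), of p "A + B * p ^ n"] by simp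
qed

lemma digit_add_top: "A < p ^ n \<Longrightarrow> digit p (A + B * p ^ n) n = B mod p"
proof -
  assume a: "A < p ^ n"
  then have "p ^ n > 0" by (metis gr_zeroI not_less0)
  then have "(A + B * p ^ n) div p ^ n = B" using a by simp
  then show ?thesis by (simp add: digit_def)
qed

lemma digit_above: "x < p ^ i \<Longrightarrow> digit p x i = 0"
  by (simp add: digit_def)

lemma digit_lt: "0 < p \<Longrightarrow> digit p x i < p"
  by (simp add: digit_def)

lemma digits_sum_lt: "(\<forall>i<n. d i < (p::nat)) \<Longrightarrow> (\<Sum>i<n. d i * p ^ i) < p ^ n"
proof (induction n)
  case 0
  then show ?case by simp
next
  case (Suc n)
  then have s: "(\<Sum>i<n. d i * p ^ i) < p ^ n" and dn: "d n + 1 \<le> p" by auto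
  have "(\<Sum>i<Suc n. d i * p ^ i) = (\<Sum>i<n. d i * p ^ i) + d n * p ^ n" by simp
  also have "\<dots> < p ^ n + d n * p ^ n" using s by simp
  also have "\<dots> = (d n + 1) * p ^ n" by simp
  also have "\<dots> \<le> p * p ^ n" using dn by (rule mult_right_mono) simp
  finally show ?case by simp
qed

lemma digit_sum: "(\<forall>i<n. d i < (p::nat)) \<Longrightarrow> j < n \<Longrightarrow> digit p (\<Sum>i<n. d i * p ^ i) j = d j"
proof (induction n)
  case 0
  then show ?case by simp
next
  case (Suc n)
  have lt: "(\<Sum>i<n. d i * p ^ i) < p ^ n" using Suc.prems digits_sum_lt[of n d p] by auto
  have eq: "(\<Sum>i<Suc n. d i * p ^ i) = (\<Sum>i<n. d i * p ^ i) + d n * p ^ n" by simp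
  show ?case
  proof (cases "j < n")
    case True
    then show ?thesis using Suc digit_add_high[OF lt True] eq by auto
  next
    case False
    then have "j = n" using Suc.prems by simp
    then show ?thesis using eq digit_add_top[OF lt, of "d n"] Suc.prems by simp
  qed
qed

lemma digits_eq_mod: "(\<forall>i<n. digit p x i = digit p y i) \<Longrightarrow> x mod p ^ n = y mod p ^ n"
proof (induction n)
  case 0
  then show ?case by simp
next
  case (Suc n)
  have "\<And>z. z mod p ^ Suc n = p ^ n * digit p z n + z mod p ^ n"
    by (metis digit_def mod_mult2_eq power_Suc2 add.commute)
  then show ?case using Suc by simp
qed

lemma Y_digit: "i < Suc k \<Longrightarrow> j < p ^ Suc k \<Longrightarrow> Y p (Suc k) i j = digit p j i"
proof (induction k arbitrary: i j)
  case 0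
  then show ?case by (simp add: digit_def)
next
  case (Suc k)
  have pp: "p > 0" using Suc.prems(2) by (metis gr0I less_nat_zero_code power_0_left zero_less_Suc)
  show ?case
  proof (cases "i < Suc k")
    case True
    have "j mod p ^ Suc k < p ^ Suc k" using pp by simp
    then have "Y p (Suc k) i (j mod p ^ Suc k) = digit p (j mod p ^ Suc k) i"
      using Suc.IH True by blast
    then show ?thesis using True digit_mod_pow[OF True] by simp
  next
    case False
    then have i: "i = Suc k" using Suc.prems by simp
    have "j div p ^ Suc k < p" using Suc.prems(2)
      by (metis less_mult_imp_div_less mult.commute power_Suc)
    then show ?thesis using i by (simp add: digit_def)
  qed
qed

lemma phi_length: "length (phi p r x) = p ^ (r - 1)"
  by (simp add: phi_def)

lemma phi_nth: "1 \<le> r \<Longrightarrow> (r = 1 \<longrightarrow> x < p) \<Longrightarrow> j < p ^ (r - 1) \<Longrightarrow>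
  phi p r x ! j = (digit p x (r - 1) + (\<Sum>i<r - 1. digit p x i * digit p j i)) mod p"
proof -
  assume r: "1 \<le> r" "r = 1 \<longrightarrow> x < p" "j < p ^ (r - 1)"
  show ?thesis
  proof (cases "r = 1")
    case True
    then show ?thesis using r by (simp add: phi_def digit_def)
  next
    case False
    then obtain k where k: "r - 1 = Suc k" using r by (metis Suc_diff_1 le_eq_less_or_eq less_one not_le zero_less_diff One_nat_def)
    have "(\<Sum>i<r - 1. digit p x i * Y p (r - 1) i j) = (\<Sum>i<r - 1. digit p x i * digit p j i)"
      using Y_digit r(3) k by (intro sum.cong) auto
    then show ?thesis using False r by (simp add: phi_def)
  qed
qed

lemma Phi_length: "length (Phi p r v) = length v * p ^ (r - 1)"
  by (induction v) (simp_all add: Phi_def phi_length)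

lemma Phi_nth: "a < length v \<Longrightarrow> b < p ^ (r - 1) \<Longrightarrow>
   Phi p r v ! (a * p ^ (r - 1) + b) = phi p r (v ! a) ! b"
proof (induction v arbitrary: a)
  case Nil
  then show ?case by simp
next
  case (Cons x v)
  have c: "Phi p r (x # v) = phi p r x @ Phi p r v" by (simp add: Phi_def)
  show ?case
  proof (cases a)
    case 0
    then show ?thesis using Cons.prems c by (simp add: nth_append phi_length)
  next
    case (Suc a')
    have "Phi p r v ! (a' * p ^ (r - 1) + b) = phi p r (v ! a') ! b"
      using Cons Suc by simp
    then show ?thesis using c Suc by (simp add: nth_append phi_length algebra_simps)
  qed
qed

lemma gamma_length: "length (gamma p s x) = p ^ (s - 1)"
  by (simp add: gamma_def)

lemma gPhi: "2 \<le> s \<Longrightarrow> length v = p \<Longrightarrow> a < p \<Longrightarrow> k < p ^ (s - 2) \<Longrightarrow>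
   gamma p s (Phi p (s - 1) v) ! (a + p * k) = phi p (s - 1) (v ! a) ! k"
proof -
  assume h: "2 \<le> s" "length v = p" "a < p" "k < p ^ (s - 2)"
  have e: "p ^ (s - 1) = p * p ^ (s - 2)" using h(1)
    by (metis Suc_diff_Suc Suc_1 diff_Suc_1 less_le_trans lessI power_Suc)
  have "a + p * k < p + p * k" using h by simp
  also have "\<dots> = p * (k + 1)" by simp
  also have "\<dots> \<le> p * p ^ (s - 2)" using h(4) by (intro mult_left_mono) auto
  finally have lt: "a + p * k < p ^ (s - 1)" using e by simp
  have m: "(a + p * k) mod p = a" "(a + p * k) div p = k" using h(3) by auto
  have "s - 1 - 1 = s - 2" by simp
  then show ?thesis using lt m h Phi_nth[of a v k p "s - 1"]
    by (simp add: gamma_def mult.commute)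
qed

lemma digit_zero: "digit p 0 i = 0" by (simp add: digit_def)

lemma digit_pow: "1 < p \<Longrightarrow> digit p (p ^ i) i' = (if i' = i then 1 else 0)"
proof -
  assume p: "1 < p"
  have e: "p ^ i = 0 + 1 * p ^ i" by simp
  have z: "(0::nat) < p ^ i" using p by simp
  show ?thesis
  proof (cases "i' < i")
    case True
    then show ?thesis using digit_add_high[OF z True, of 1] e digit_zero by simp
  next
    case False
    show ?thesis
    proof (cases "i' = i")
      case True
      then show ?thesis using digit_add_top[OF z, of 1] e p by simp
    next
      case F: False
      then have "i < i'" using False by simp
      then have "p ^ i < p ^ i'" using p by (simp add: power_strict_increasing)
      then show ?thesis using F digit_above by simp
    qed
  qed
qed

lemma mod_add_cancel_lt: "(a + b) mod p = (a + c) mod (p::nat) \<Longrightarrow> b < p \<Longrightarrow> c < p \<Longrightarrow> b = c"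
proof -
  assume h: "(a + b) mod p = (a + c) mod (p::nat)" "b < p" "c < p"
  then have "int ((a + b) mod p) = int ((a + c) mod p)" by simp
  then have "(int a + int b) mod int p = (int a + int c) mod int p" by (simp add: zmod_int)
  then have d: "int p dvd (int a + int b) - (int a + int c)" by (simp add: mod_eq_dvd_iff)
  show "b = c"
  proof (rule ccontr)
    assume "b \<noteq> c"
    then have "int b - int c \<noteq> 0" by simp
    have "int p dvd int b - int c" using d by simp
    from dvd_imp_le_int[OF \<open>int b - int c \<noteq> 0\<close> this] have "\<bar>int p\<bar> \<le> \<bar>int b - int c\<bar>" by blast
    then show False using h by simp
  qed
qed

lemma phi_inj: "1 \<le> r \<Longrightarrow> 1 < p \<Longrightarrow> x < p ^ r \<Longrightarrow> y < p ^ r \<Longrightarrow>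
   (\<forall>j<p ^ (r - 1). phi p r x ! j = phi p r y ! j) \<Longrightarrow> x = y"
proof -
  assume r: "1 \<le> r" and p: "1 < p" and xy: "x < p ^ r" "y < p ^ r"
     and e: "\<forall>j<p ^ (r - 1). phi p r x ! j = phi p r y ! j"
  show ?thesis
  proof (cases "r = 1")
    case True
    then show ?thesis using e xy by (simp add: phi_def)
  next
    case False
    have pre: "r = 1 \<longrightarrow> x < p" "r = 1 \<longrightarrow> y < p" using False by auto
    have top: "digit p x (r - 1) = digit p y (r - 1)"
    proof -
      have "phi p r x ! 0 = phi p r y ! 0" using e p by simp
      then show ?thesis using phi_nth[OF r pre(1), of 0] phi_nth[OF r pre(2), of 0] p
        by (simp add: digit_zero digit_def)
    qed
    have low: "digit p x i = digit p y i" if i: "i < r - 1" for i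
    proof -
      have lt: "p ^ i < p ^ (r - 1)" using i p by (simp add: power_strict_increasing)
      have sx: "(\<Sum>i'<r - 1. digit p z i' * digit p (p ^ i) i') = digit p z i" for z
        using i by (simp add: digit_pow[OF p] if_distrib cong: if_cong)
      have "phi p r x ! (p ^ i) = phi p r y ! (p ^ i)" using e lt by simp
      then have "(digit p x (r - 1) + digit p x i) mod p = (digit p y (r - 1) + digit p y i) mod p"
        using phi_nth[OF r pre(1) lt] phi_nth[OF r pre(2) lt] sx by simp
      then show ?thesis using top mod_add_cancel_lt digit_lt p by (metis less_trans zero_less_one)
    qed
    have "\<forall>i<r. digit p x i = digit p y i"
    proof (intro allI impI)
      fix i assume "i < r"
      then show "digit p x i = digit p y i" using top low
        by (cases "i = r - 1") auto
    qed
    then have "x mod p ^ r = y mod p ^ r" by (rule digits_eq_mod)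
    then show ?thesis using xy by simp
  qed
qed

definition Lf :: "nat \<Rightarrow> nat \<Rightarrow> nat \<Rightarrow> nat \<Rightarrow> nat" where
  "Lf p s u a = (\<Sum>i<s - 1. digit p u (Suc i) * p ^ i) + a * digit p u 0 * p ^ (s - 2)"

definition tv :: "nat \<Rightarrow> nat \<Rightarrow> nat \<Rightarrow> nat list" where
  "tv p s u = map (\<lambda>a. Lf p s u a mod p ^ (s - 1)) [0..<p]"

lemma Lf_split: "2 \<le> s \<Longrightarrow> Lf p s u a =
   (\<Sum>i<s - 2. digit p u (Suc i) * p ^ i) + (digit p u (s - 1) + a * digit p u 0) * p ^ (s - 2)"
proof -
  assume s: "2 \<le> s"
  then have e: "s - 1 = Suc (s - 2)" by simp
  have "(\<Sum>i<s - 1. digit p u (Suc i) * p ^ i) = (\<Sum>i<s - 2. digit p u (Suc i) * p ^ i) + digit p u (Suc (s - 2)) * p ^ (s - 2)"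
    by (simp only: e sum.lessThan_Suc)
  moreover have "Suc (s - 2) = s - 1" using e by simp
  ultimately show ?thesis unfolding Lf_def by (simp add: algebra_simps)
qed

lemma tv_digits:
  assumes s: "2 \<le> s" and p: "1 < p"
  shows "i < s - 2 \<Longrightarrow> digit p (Lf p s u a mod p ^ (s - 1)) i = digit p u (Suc i)"
    and "digit p (Lf p s u a mod p ^ (s - 1)) (s - 2) = (digit p u (s - 1) + a * digit p u 0) mod p"
proof -
  have lt: "(\<Sum>i<s - 2. digit p u (Suc i) * p ^ i) < p ^ (s - 2)"
    using digits_sum_lt[of "s - 2" "\<lambda>i. digit p u (Suc i)" p] digit_lt p by simp
  have lt2: "s - 2 < s - 1" using s by simp
  {
    assume i: "i < s - 2"
    have "digit p (Lf p s u a mod p ^ (s - 1)) i = digit p (Lf p s u a) i"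
      using i lt2 by (intro digit_mod_pow) simp
    also have "\<dots> = digit p (\<Sum>i<s - 2. digit p u (Suc i) * p ^ i) i"
      unfolding Lf_split[OF s] by (rule digit_add_high[OF lt i])
    also have "\<dots> = digit p u (Suc i)"
      using digit_sum[of "s - 2" "\<lambda>i. digit p u (Suc i)" p i] digit_lt p i by simp
    finally show "digit p (Lf p s u a mod p ^ (s - 1)) i = digit p u (Suc i)" .
  }
  have "digit p (Lf p s u a mod p ^ (s - 1)) (s - 2) = digit p (Lf p s u a) (s - 2)"
    using lt2 by (intro digit_mod_pow)
  also have "\<dots> = (digit p u (s - 1) + a * digit p u 0) mod p"
    unfolding Lf_split[OF s] by (rule digit_add_top[OF lt])
  finally show "digit p (Lf p s u a mod p ^ (s - 1)) (s - 2) = (digit p u (s - 1) + a * digit p u 0) mod p" .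
qed

lemma digit_Suc: "digit p k (Suc i) = digit p (k div p) i"
  by (simp add: digit_def div_mult2_eq power_Suc)

lemma tv_length: "length (tv p s u) = p" by (simp add: tv_def)

lemma tv_lt: "1 < p \<Longrightarrow> x \<in> set (tv p s u) \<Longrightarrow> x < p ^ (s - 1)"
  by (auto simp: tv_def)

lemma tv_exists:
  assumes s: "2 \<le> s" and p: "1 < p"
  shows "gamma p s (Phi p (s - 1) (tv p s u)) = phi p s u"
proof (rule nth_equalityI)
  show "length (gamma p s (Phi p (s - 1) (tv p s u))) = length (phi p s u)"
    by (simp add: gamma_length phi_length)
next
  fix k assume "k < length (gamma p s (Phi p (s - 1) (tv p s u)))"
  then have k: "k < p ^ (s - 1)" by (simp add: gamma_length)
  define a where "a = k mod p"
  define k' where "k' = k div p"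
  have e: "p ^ (s - 1) = p ^ (s - 2) * p" using s
    by (metis Suc_diff_Suc Suc_1 diff_Suc_1 less_le_trans lessI power_Suc mult.commute)
  have ka: "k = a + p * k'" by (simp add: a_def k'_def)
  have a: "a < p" using p by (simp add: a_def)
  have k': "k' < p ^ (s - 2)" using k e p unfolding k'_def by (metis less_mult_imp_div_less)
  define x where "x = Lf p s u a mod p ^ (s - 1)"
  have tva: "tv p s u ! a = x" using a by (simp add: tv_def x_def)
  have xlt: "x < p ^ (s - 1)" using p by (simp add: x_def)
  have r1: "1 \<le> s - 1" "s - 1 = 1 \<longrightarrow> x < p" using s xlt by auto
  have ss: "s - 1 - 1 = s - 2" by simp
  have "gamma p s (Phi p (s - 1) (tv p s u)) ! k = phi p (s - 1) x ! k'"
    using gPhi[OF s tv_length a k'] ka tva by simp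
  also have "\<dots> = (digit p x (s - 2) + (\<Sum>i<s - 2. digit p x i * digit p k' i)) mod p"
    using phi_nth[OF r1, of k'] k' ss by simp
  also have "\<dots> = ((digit p u (s - 1) + a * digit p u 0) mod p + (\<Sum>i<s - 2. digit p u (Suc i) * digit p k' i)) mod p"
    using tv_digits[OF s p] unfolding x_def by simp
  also have "\<dots> = (digit p u (s - 1) + a * digit p u 0 + (\<Sum>i<s - 2. digit p u (Suc i) * digit p k' i)) mod p"
    by (simp add: mod_add_left_eq)
  also have "\<dots> = (digit p u (s - 1) + (\<Sum>i<s - 1. digit p u i * digit p k i)) mod p"
  proof -
    have e1: "s - 1 = Suc (s - 2)" using s by simp
    have "(\<Sum>i<s - 1. digit p u i * digit p k i) = digit p u 0 * digit p k 0 + (\<Sum>i<s - 2. digit p u (Suc i) * digit p k (Suc i))"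
      by (simp only: e1 sum.lessThan_Suc_shift)
    moreover have "digit p k 0 = a" by (simp add: digit_def a_def)
    moreover have "digit p k (Suc i) = digit p k' i" for i by (simp add: digit_Suc k'_def)
    ultimately show ?thesis by (simp add: algebra_simps)
  qed
  also have "\<dots> = phi p s u ! k"
    using phi_nth[of s u p k] s k by simp
  finally show "gamma p s (Phi p (s - 1) (tv p s u)) ! k = phi p s u ! k" .
qed

lemma gPhi_inj:
  assumes s: "2 \<le> s" and p: "1 < p"
    and v: "length v = p" "\<forall>x\<in>set v. x < p ^ (s - 1)"
    and w: "length w = p" "\<forall>x\<in>set w. x < p ^ (s - 1)"
    and e: "gamma p s (Phi p (s - 1) v) = gamma p s (Phi p (s - 1) w)"
  shows "v = w"
proof (rule nth_equalityI)
  show "length v = length w" using v w by simp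
next
  fix a assume "a < length v"
  then have a: "a < p" using v by simp
  have "\<forall>j<p ^ (s - 1 - 1). phi p (s - 1) (v ! a) ! j = phi p (s - 1) (w ! a) ! j"
  proof (intro allI impI)
    fix j assume "j < p ^ (s - 1 - 1)"
    moreover have "s - 1 - 1 = s - 2" by simp
    ultimately have j: "j < p ^ (s - 2)" by metis
    show "phi p (s - 1) (v ! a) ! j = phi p (s - 1) (w ! a) ! j"
      using gPhi[OF s v(1) a j] gPhi[OF s w(1) a j] e by simp
  qed
  moreover have "v ! a < p ^ (s - 1)" "w ! a < p ^ (s - 1)" using v w a by auto
  ultimately show "v ! a = w ! a"
    using phi_inj[of "s - 1" p "v ! a" "w ! a"] s p by simp
qed

lemma tau_eq: "2 \<le> s \<Longrightarrow> 1 < p \<Longrightarrow> tau p s u = tv p s u"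
  unfolding tau_def
proof (rule the_equality)
  assume s: "2 \<le> s" and p: "1 < p"
  show "length (tv p s u) = p \<and> (\<forall>x\<in>set (tv p s u). x < p ^ (s - 1)) \<and>
        gamma p s (Phi p (s - 1) (tv p s u)) = phi p s u"
    using tv_length tv_lt[OF p] tv_exists[OF s p] by blast
  fix v assume h: "length v = p \<and> (\<forall>x\<in>set v. x < p ^ (s - 1)) \<and>
        gamma p s (Phi p (s - 1) v) = phi p s u"
  show "v = tv p s u"
    using gPhi_inj[OF s p, of v "tv p s u"] h tv_length tv_lt[OF p] tv_exists[OF s p] by auto
qed

lemma vsum_foldr:
  assumes "\<forall>i\<in>set xs. length (f i) = n"
  shows "length (foldr (\<lambda>i acc. vadd m (f i) acc) xs (replicate n 0)) = n \<and>
    (\<forall>a<n. foldr (\<lambda>i acc. vadd m (f i) acc) xs (replicate n 0) ! a = (\<Sum>i\<leftarrow>xs. f i ! a) mod m)"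
  using assms
proof (induction xs)
  case Nil
  then show ?case by simp
next
  case (Cons x xs)
  then show ?case by (auto simp: vadd_def mod_add_right_eq)
qed

lemma vsum_nth: "\<forall>i<s. length (f i) = n \<Longrightarrow> length (vsum m n f s) = n"
  "\<forall>i<s. length (f i) = n \<Longrightarrow> a < n \<Longrightarrow> vsum m n f s ! a = (\<Sum>i<s. f i ! a) mod m"
  using vsum_foldr[of "[0..<s]" f n m]
  by (auto simp: vsum_def lessThan_atLeast0 sum_set_upt_conv_sum_list_nat[symmetric])

lemma digit_single: "1 < p \<Longrightarrow> c < p \<Longrightarrow> digit p (c * p ^ j) i = (if i = j then c else 0)"
proof -
  assume p: "1 < p" and c: "c < p"
  have e: "c * p ^ j = 0 + c * p ^ j" by simp
  have z: "(0::nat) < p ^ j" using p by simp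
  show ?thesis
  proof (cases "i < j")
    case True
    then show ?thesis using digit_add_high[OF z True, of c] e digit_zero by simp
  next
    case False
    show ?thesis
    proof (cases "i = j")
      case True
      then show ?thesis using digit_add_top[OF z, of c] e c by simp
    next
      case F: False
      then have "Suc j \<le> i" using False by simp
      then have "p ^ Suc j \<le> p ^ i" using p by (intro power_increasing) auto
      moreover have "c * p ^ j < p ^ Suc j" using c z by simp
      ultimately have "c * p ^ j < p ^ i" by linarith
      then show ?thesis using F digit_above by simp
    qed
  qed
qed

theorem corollary1:
  fixes p s :: nat and lam :: "nat \<Rightarrow> nat"
  assumes "prime p" and "s \<ge> 2" and "\<forall>i<s. lam i < p"
  shows "tau p s (\<Sum>i<s. lam i * p ^ i)
           = vsum (p ^ (s - 1)) p (\<lambda>i. tau p s (lam i * p ^ i)) s"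
proof -
  have p: "1 < p" using assms(1) by (rule prime_gt_1_nat)
  have s: "2 \<le> s" using assms(2) .
  define u where "u = (\<Sum>i<s. lam i * p ^ i)"
  define m where "m = p ^ (s - 1)"
  have du: "digit p u i = lam i" if "i < s" for i
    using digit_sum[of s lam p i] assms(3) that by (simp add: u_def)
  have dsum: "(\<Sum>j<s. digit p (lam j * p ^ j) i) = lam i" if "i < s" for i
    using that assms(3) p by (simp add: digit_single if_distrib cong: if_cong)
  have L: "(\<Sum>j<s. Lf p s (lam j * p ^ j) a) = Lf p s u a" for a
  proof -
    have "(\<Sum>j<s. Lf p s (lam j * p ^ j) a) =
      (\<Sum>i<s - 1. (\<Sum>j<s. digit p (lam j * p ^ j) (Suc i)) * p ^ i)
      + a * (\<Sum>j<s. digit p (lam j * p ^ j) 0) * p ^ (s - 2)"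
      unfolding Lf_def sum.distrib
      by (simp add: sum_distrib_right sum_distrib_left sum.swap[of _ "{..<s}"] mult.assoc)
    also have "\<dots> = Lf p s u a"
      unfolding Lf_def using dsum du s by simp
    finally show ?thesis .
  qed
  have len: "\<forall>i<s. length (tau p s (lam i * p ^ i)) = p"
    using tau_eq[OF s p] tv_length by simp
  show ?thesis
    unfolding u_def[symmetric] m_def[symmetric]
  proof (rule nth_equalityI)
    show "length (tau p s u) = length (vsum m p (\<lambda>i. tau p s (lam i * p ^ i)) s)"
      using vsum_nth(1)[OF len] tau_eq[OF s p] tv_length by simp
  next
    fix a assume "a < length (tau p s u)"
    then have a: "a < p" using tau_eq[OF s p] tv_length by simp
    have "vsum m p (\<lambda>i. tau p s (lam i * p ^ i)) s ! a = (\<Sum>j<s. Lf p s (lam j * p ^ j) a mod m) mod m"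
      using vsum_nth(2)[OF len a] tau_eq[OF s p] a by (simp add: tv_def m_def)
    also have "\<dots> = (\<Sum>j<s. Lf p s (lam j * p ^ j) a) mod m" by (simp add: mod_sum_eq)
    also have "\<dots> = tau p s u ! a" using L tau_eq[OF s p] a by (simp add: tv_def m_def)
    finally show "tau p s u ! a = vsum m p (\<lambda>i. tau p s (lam i * p ^ i)) s ! a" by simp
  qed
qed

end
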